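(* Let $p,q\ge1$, $N>\max(p,q)$, let $\mu$ be a $q\times p$ matrix of measures, and assume $\mathscr M_N$ admits a Gauss--Borel factorization $\mathscr M_N=\mathscr L_N^{-1}\mathscr U_N^{-1}$ (with $\mathscr L_n,\mathscr U_n$, $n\le N$, the leading principal submatrices). With $\mathscr T^{[N-q,N]}:=\mathscr L_{N-q}\Lambda^{[N-q,N]}_{[q]}\mathscr L_N^{-1}$ and $\mathscr T^{[N,N-p]}:=\mathscr U_N^{-1}(\Lambda^{[N-p,N]}_{[p]})^\top\mathscr U_{N-p}$, the following recursion relations hold: \[\mathscr T^{[N-q,N]}B^{[N]}(x)=x\,B^{[N-q]}(x),\qquad A^{[N]}(x)\,\mathscr T^{[N,N-p]}=x\,A^{[N-p]}(x).\]
   Context: All matrices are indexed from $0$. $\mu$ is a $q\times p$ matrix of real measures with finite moments. For $r,n\ge1$, $X^{[n]}_{[r]}(x)$ is the $n\times r$ matrix whose row $k$ is $x^{\lfloor k/r\rfloor}e_{k\bmod r}^\top$ ($e_0,\dots,e_{r-1}$ standard basis of $\mathbb R^r$). Moment matrices: $\mathscr M^{[n,m]}=\int X^{[n]}_{[q]}\,\mathrm d\mu\,(X^{[m]}_{[p]})^\top$, $\mathscr M_n=\mathscr M^{[n,n]}$. Gauss--Borel factorization: $\mathscr M_N=\mathscr L_N^{-1}\mathscr U_N^{-1}$, $\mathscr L_N$ nonsingular lower triangular, $\mathscr U_N$ nonsingular upper triangular. For $n\le N$: $B^{[n]}(x):=\mathscr L_nX^{[n]}_{[q]}(x)$ ($n\times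 q$) and $A^{[n]}(x):=(X^{[n]}_{[p]}(x))^\top\mathscr U_n$ ($p\times n$). $\Lambda^{[n,n+r]}_{[r]}$ is the $n\times(n+r)$ matrix with entries $\delta_{j,i+r}$. *)

theory Defs
  imports "HOL-Analysis.Analysis" "Jordan_Normal_Form.Matrix"
begin

(* All matrices are indexed from 0. *)

(* A real (signed) measure is represented as the difference \<mu>p - \<mu>n of two finite
   Borel measures on the real line. A q x p matrix of real measures is a pair of
   functions  \<mu>p \<mu>n :: nat \<Rightarrow> nat \<Rightarrow> real measure  (entries (i,j), i<q, j<p). *)
definition real_measure_finite_moments :: "real measure \<Rightarrow> real measure \<Rightarrow> bool" where
  "real_measure_finite_moments m1 m2 \<longleftrightarrow>
     sets m1 = sets borel \<and> sets m2 = sets borel \<and>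
     finite_measure m1 \<and> finite_measure m2 \<and>
     (\<forall>k::nat. integrable m1 (\<lambda>x. x ^ k) \<and> integrable m2 (\<lambda>x. x ^ k))"

definition moment :: "real measure \<Rightarrow> real measure \<Rightarrow> nat \<Rightarrow> real" where
  "moment m1 m2 k = (\<integral>x. x ^ k \<partial>m1) - (\<integral>x. x ^ k \<partial>m2)"

definition Xmat :: "nat \<Rightarrow> nat \<Rightarrow> real \<Rightarrow> real mat" where
  "Xmat n r x = mat n r (\<lambda>(k, j). if j = k mod r then x ^ (k div r) else 0)"

(* Moment matrix  M^{[n,m]} = \<integral> X^{[n]}_{[q]} d\<mu> (X^{[m]}_{[p]})^T, entrywise *)
definition moment_matrix ::
  "nat \<Rightarrow> nat \<Rightarrow> (nat \<Rightarrow> nat \<Rightarrow> real measure) \<Rightarrow> (nat \<Rightarrow> nat \<Rightarrow> real measure)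
     \<Rightarrow> nat \<Rightarrow> nat \<Rightarrow> real mat" where
  "moment_matrix q p \<mu>p \<mu>n n m =
     mat n m (\<lambda>(a, b). moment (\<mu>p (a mod q) (b mod p)) (\<mu>n (a mod q) (b mod p))
                              (a div q + b div p))"

definition lower_triangular :: "'a::zero mat \<Rightarrow> bool" where
  "lower_triangular A \<longleftrightarrow> (\<forall>i < dim_row A. \<forall>j < dim_col A. i < j \<longrightarrow> A $$ (i, j) = 0)"

definition mat_inv :: "real mat \<Rightarrow> real mat" where
  "mat_inv A = (SOME B. B \<in> carrier_mat (dim_row A) (dim_row A) \<and> inverts_mat A B \<and> inverts_mat B A)"

definition lead_sub :: "nat \<Rightarrow> 'a mat \<Rightarrow> 'a mat" where
  "lead_sub n A = mat n n (\<lambda>(i, j). A $$ (i, j))"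

definition Lambda_mat :: "nat \<Rightarrow> nat \<Rightarrow> real mat" where
  "Lambda_mat n r = mat n (n + r) (\<lambda>(i, j). if j = i + r then 1 else 0)"

end

theory Submission
  imports Defs
begin

lemma Lam_X:
  assumes r: "r \<ge> 1"
  shows "Lambda_mat n r * Xmat (n + r) r x = x \<cdot>\<^sub>m Xmat n r x"
proof (rule eq_matI)
  fix i j assume i: "i < dim_row (x \<cdot>\<^sub>m Xmat n r x)" and j: "j < dim_col (x \<cdot>\<^sub>m Xmat n r x)"
  hence i: "i < n" and j: "j < r" by (auto simp: Xmat_def)
  have "(Lambda_mat n r * Xmat (n + r) r x) $$ (i, j)
      = (\<Sum>k<n+r. (if k = i + r then 1 else 0) * (if j = k mod r then x ^ (k div r) else 0))"
    using i j unfolding Lambda_mat_def Xmat_def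
    by (simp add: scalar_prod_def row_def col_def lessThan_atLeast0)
  also have "\<dots> = (if j = (i + r) mod r then x ^ ((i + r) div r) else 0)"
    using i by (simp add: if_distrib[where f="\<lambda>a. a * _"] sum.delta' cong: if_cong)
  also have "\<dots> = x * (if j = i mod r then x ^ (i div r) else 0)"
    using r by (simp add: div_add_self2)
  finally show "(Lambda_mat n r * Xmat (n + r) r x) $$ (i, j) = (x \<cdot>\<^sub>m Xmat n r x) $$ (i, j)"
    using i j by (simp add: Xmat_def)
qed (auto simp: Xmat_def Lambda_mat_def)

lemma mat_inv_left:
  assumes "A \<in> carrier_mat n n" "invertible_mat A"
  shows "mat_inv A \<in> carrier_mat n n \<and> mat_inv A * A = 1\<^sub>m n \<and> A * mat_inv A = 1\<^sub>m n"
proof -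
  obtain B where B: "inverts_mat A B" "inverts_mat B A"
    using assms(2) unfolding invertible_mat_def by blast
  have "B \<in> carrier_mat n n"
  proof -
    have e1: "A * B = 1\<^sub>m n" and e2: "B * A = 1\<^sub>m (dim_row B)"
      using B assms(1) unfolding inverts_mat_def by auto
    have "dim_col (A * B) = n" unfolding e1 by simp
    hence "dim_col B = n" by simp
    moreover have "dim_col (B * A) = dim_row B" unfolding e2 by simp
    hence "dim_row B = n" using assms(1) by simp
    ultimately show ?thesis by auto
  qed
  hence "\<exists>B. B \<in> carrier_mat (dim_row A) (dim_row A) \<and> inverts_mat A B \<and> inverts_mat B A"
    using B assms(1) by auto
  hence "mat_inv A \<in> carrier_mat (dim_row A) (dim_row A) \<and> inverts_mat A (mat_inv A) \<and> inverts_mat (mat_inv A) A"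
    unfolding mat_inv_def by (rule someI_ex)
  thus ?thesis using assms(1) unfolding inverts_mat_def by auto
qed

lemma transpose_smult_mat: "transpose_mat (k \<cdot>\<^sub>m A) = k \<cdot>\<^sub>m transpose_mat A"
  by (rule eq_matI) auto

lemma lead_sub_full: "A \<in> carrier_mat n n \<Longrightarrow> lead_sub n A = A"
  unfolding lead_sub_def by (auto intro!: eq_matI)

lemma lead_sub_carrier: "lead_sub n A \<in> carrier_mat n n"
  unfolding lead_sub_def by auto

lemma Xmat_carrier: "Xmat n r x \<in> carrier_mat n r"
  unfolding Xmat_def by auto

lemma Lam_carrier: "Lambda_mat n r \<in> carrier_mat n (n + r)"
  unfolding Lambda_mat_def by auto

theorem mainTheorem7:
  fixes p q N :: nat
    and \<mu>p \<mu>n :: "nat \<Rightarrow> nat \<Rightarrow> real measure"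
    and L U :: "real mat"
  assumes "p \<ge> 1" and "q \<ge> 1" and "N > max p q"
    and "\<forall>i<q. \<forall>j<p. real_measure_finite_moments (\<mu>p i j) (\<mu>n i j)"
    and "L \<in> carrier_mat N N" and "U \<in> carrier_mat N N"
    and "invertible_mat L" and "invertible_mat U"
    and "lower_triangular L" and "upper_triangular U"
    and "moment_matrix q p \<mu>p \<mu>n N N = mat_inv L * mat_inv U"
  shows "\<forall>x::real.
      (lead_sub (N - q) L * Lambda_mat (N - q) q * mat_inv L) * (lead_sub N L * Xmat N q x)
        = x \<cdot>\<^sub>m (lead_sub (N - q) L * Xmat (N - q) q x)
    \<and> (transpose_mat (Xmat N p x) * lead_sub N U)
        * (mat_inv U * transpose_mat (Lambda_mat (N - p) p) * lead_sub (N - p) U)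
        = x \<cdot>\<^sub>m (transpose_mat (Xmat (N - p) p x) * lead_sub (N - p) U)"
proof
  fix x :: real
  have Nq: "N - q + q = N" and Np: "N - p + p = N" using assms(3) by auto
  obtain Li where Li: "Li = mat_inv L" by blast
  obtain Ui where Ui: "Ui = mat_inv U" by blast
  have LiC: "Li \<in> carrier_mat N N" and LiL: "Li * L = 1\<^sub>m N"
    using mat_inv_left[OF assms(5,7)] Li by auto
  have UiC: "Ui \<in> carrier_mat N N" and UUi: "U * Ui = 1\<^sub>m N"
  proof -
    show "Ui \<in> carrier_mat N N" using mat_inv_left[OF assms(6,8)] Ui by auto
    show "U * Ui = 1\<^sub>m N"
      using mat_inv_left[OF assms(6,8)] Ui by auto
  qed
  define Lq where "Lq = lead_sub (N - q) L"
  define Up where "Up = lead_sub (N - p) U"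
  define Lam where "Lam = Lambda_mat (N - q) q"
  define Lap where "Lap = Lambda_mat (N - p) p"
  have LqC: "Lq \<in> carrier_mat (N-q) (N-q)" and UpC: "Up \<in> carrier_mat (N-p) (N-p)"
    unfolding Lq_def Up_def by (auto intro: lead_sub_carrier)
  have LamC: "Lam \<in> carrier_mat (N-q) N" unfolding Lam_def using Lam_carrier[of "N-q" q] Nq by simp
  have LapC: "Lap \<in> carrier_mat (N-p) N" unfolding Lap_def using Lam_carrier[of "N-p" p] Np by simp
  have XqC: "Xmat N q x \<in> carrier_mat N q" by (rule Xmat_carrier)
  have XpC: "Xmat N p x \<in> carrier_mat N p" by (rule Xmat_carrier)
  have LX: "Lam * Xmat N q x = x \<cdot>\<^sub>m Xmat (N - q) q x"
    unfolding Lam_def using Lam_X[OF assms(2), of "N-q" x] Nq by simp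
  have LXp: "Lap * Xmat N p x = x \<cdot>\<^sub>m Xmat (N - p) p x"
    unfolding Lap_def using Lam_X[OF assms(1), of "N-p" x] Np by simp
  have "(Lq * Lam * Li) * (L * Xmat N q x) = Lq * (Lam * ((Li * L) * Xmat N q x))"
  proof -
    have a: "Lq * Lam * Li = Lq * (Lam * Li)" using LqC LamC LiC by (rule assoc_mult_mat)
    have b: "(Lq * (Lam * Li)) * (L * Xmat N q x) = Lq * ((Lam * Li) * (L * Xmat N q x))"
      using LqC mult_carrier_mat[OF LamC LiC] mult_carrier_mat[OF assms(5) XqC] by (rule assoc_mult_mat)
    have c: "(Lam * Li) * (L * Xmat N q x) = Lam * (Li * (L * Xmat N q x))"
      using LamC LiC mult_carrier_mat[OF assms(5) XqC] by (rule assoc_mult_mat)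
    have d: "Li * (L * Xmat N q x) = (Li * L) * Xmat N q x"
      using LiC assms(5) XqC by (rule assoc_mult_mat[symmetric])
    show ?thesis unfolding a b c d ..
  qed
  also have "\<dots> = Lq * (x \<cdot>\<^sub>m Xmat (N - q) q x)" using LiL LX XqC by simp
  also have "\<dots> = x \<cdot>\<^sub>m (Lq * Xmat (N - q) q x)"
    using LqC Xmat_carrier by (rule mult_smult_distrib)
  finally have 1: "(Lq * Lam * Li) * (L * Xmat N q x) = x \<cdot>\<^sub>m (Lq * Xmat (N - q) q x)" .
  have tr: "transpose_mat (Xmat N p x) * transpose_mat Lap = x \<cdot>\<^sub>m transpose_mat (Xmat (N - p) p x)"
    using transpose_mult[OF LapC XpC] LXp by (simp add: transpose_smult_mat)
  have "(transpose_mat (Xmat N p x) * U) * (Ui * transpose_mat Lap * Up)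
      = (transpose_mat (Xmat N p x) * ((U * Ui) * transpose_mat Lap)) * Up"
  proof -
    have TX: "transpose_mat (Xmat N p x) \<in> carrier_mat p N" using XpC by simp
    have TL: "transpose_mat Lap \<in> carrier_mat N (N-p)" using LapC by simp
    have a: "Ui * transpose_mat Lap * Up = Ui * (transpose_mat Lap * Up)"
      using UiC TL UpC by (rule assoc_mult_mat)
    have b: "(transpose_mat (Xmat N p x) * U) * (Ui * (transpose_mat Lap * Up))
        = transpose_mat (Xmat N p x) * (U * (Ui * (transpose_mat Lap * Up)))"
      using TX assms(6) mult_carrier_mat[OF UiC mult_carrier_mat[OF TL UpC]] by (rule assoc_mult_mat)
    have c: "U * (Ui * (transpose_mat Lap * Up)) = (U * Ui) * (transpose_mat Lap * Up)"
      using assms(6) UiC mult_carrier_mat[OF TL UpC] by (rule assoc_mult_mat[symmetric])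
    have d: "(U * Ui) * (transpose_mat Lap * Up) = ((U * Ui) * transpose_mat Lap) * Up"
      using mult_carrier_mat[OF assms(6) UiC] TL UpC by (rule assoc_mult_mat[symmetric])
    have e: "transpose_mat (Xmat N p x) * (((U * Ui) * transpose_mat Lap) * Up)
        = (transpose_mat (Xmat N p x) * ((U * Ui) * transpose_mat Lap)) * Up"
      using TX mult_carrier_mat[OF mult_carrier_mat[OF assms(6) UiC] TL] UpC by (rule assoc_mult_mat[symmetric])
    show ?thesis unfolding a b c d e ..
  qed
  also have "\<dots> = (x \<cdot>\<^sub>m transpose_mat (Xmat (N - p) p x)) * Up" using UUi tr LapC by simp
  also have "\<dots> = x \<cdot>\<^sub>m (transpose_mat (Xmat (N - p) p x) * Up)"
    using transpose_carrier_mat[THEN iffD2, OF Xmat_carrier[of "N-p" p x]] UpC by (rule mult_smult_assoc_mat)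
  finally have 2: "(transpose_mat (Xmat N p x) * U) * (Ui * transpose_mat Lap * Up)
      = x \<cdot>\<^sub>m (transpose_mat (Xmat (N - p) p x) * Up)" .
  show "(lead_sub (N - q) L * Lambda_mat (N - q) q * mat_inv L) * (lead_sub N L * Xmat N q x)
        = x \<cdot>\<^sub>m (lead_sub (N - q) L * Xmat (N - q) q x)
    \<and> (transpose_mat (Xmat N p x) * lead_sub N U)
        * (mat_inv U * transpose_mat (Lambda_mat (N - p) p) * lead_sub (N - p) U)
        = x \<cdot>\<^sub>m (transpose_mat (Xmat (N - p) p x) * lead_sub (N - p) U)"
    using 1 2 lead_sub_full[OF assms(5)] lead_sub_full[OF assms(6)]
    unfolding Lq_def Up_def Lam_def Lap_def Li Ui by simp
qed

end
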